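(* Let $G=(V,E)$ be a $D$-regular bipartite unweighted graph and let $k\in\mathbb N$. Suppose there is $x_0\in V$ with $d_-^{x_0}(y)=d(x_0,y)$ for all $y\in B_k(x_0)$, and suppose (SSP) and (NCP) hold at every vertex $x\in B_{k-2}(x_0)$. Then there is a bijection $\Phi:B_k(x_0)\to\{A\subseteq\{1,\dots,D\}:\#A\le k\}$ such that for all $x,y\in B_k(x_0)$: $x\sim y$ if and only if $\Phi(x)$ and $\Phi(y)$ are adjacent in $H_D$ (i.e. $B_k(x_0)$ with induced edges is isomorphic to the $k$-ball around $\emptyset$ in the $D$-dimensional hypercube).
   Context: $d$ is the combinatorial distance, $S_j(x)=\{y:d(x,y)=j\}$, $B_j(x)=\{y:d(x,y)\le j\}$ (empty for $j<0$), $d_-^{x}(z)=\#\{y\sim z:d(y,x)<d(z,x)\}$. For a $D$-regular graph and a vertex $x$: (SSP) holds at $x$ if $\#S_2(x)\le\binom D2$; (NCP) holds at $x$ if, whenever $d_-^x(z)=2$ for all $z\in S_2(x)$, for every $y_1,y_2\in S_1(x)$ there is at most one $z\in S_2(x)$ with $y_1\sim z\sim y_2$. $H_D$ has vertex set the power set of $\{1,\dots,D\}$, with $A\sim B$ iff their symmetric difference has exactly one element. *)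

theory Defs
  imports Main "HOL-Library.Extended_Nat"
begin

definition simple_graph :: "'a set \<Rightarrow> ('a \<Rightarrow> 'a \<Rightarrow> bool) \<Rightarrow> bool" where
  "simple_graph V E \<longleftrightarrow> (\<forall>x y. E x y \<longrightarrow> x \<in> V \<and> y \<in> V) \<and> (\<forall>x y. E x y \<longrightarrow> E y x) \<and> (\<forall>x. \<not> E x x)"

definition regular :: "'a set \<Rightarrow> ('a \<Rightarrow> 'a \<Rightarrow> bool) \<Rightarrow> nat \<Rightarrow> bool" where
  "regular V E D \<longleftrightarrow> (\<forall>x\<in>V. finite {y. E x y} \<and> card {y. E x y} = D)"

definition bipartite :: "'a set \<Rightarrow> ('a \<Rightarrow> 'a \<Rightarrow> bool) \<Rightarrow> bool" where
  "bipartite V E \<longleftrightarrow> (\<exists>c :: 'a \<Rightarrow> bool. \<forall>x\<in>V. \<forall>y\<in>V. E x y \<longrightarrow> c x \<noteq> c y)"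

inductive walk :: "('a \<Rightarrow> 'a \<Rightarrow> bool) \<Rightarrow> nat \<Rightarrow> 'a \<Rightarrow> 'a \<Rightarrow> bool" for E where
  walk0: "walk E 0 x x"
| walkS: "E x y \<Longrightarrow> walk E n y z \<Longrightarrow> walk E (Suc n) x z"

definition gdist :: "('a \<Rightarrow> 'a \<Rightarrow> bool) \<Rightarrow> 'a \<Rightarrow> 'a \<Rightarrow> enat" where
  "gdist E x y = (if \<exists>n. walk E n x y then enat (LEAST n. walk E n x y) else \<infinity>)"

definition sphere :: "('a \<Rightarrow> 'a \<Rightarrow> bool) \<Rightarrow> nat \<Rightarrow> 'a \<Rightarrow> 'a set" where
  "sphere E j x = {y. gdist E x y = enat j}"

text \<open>Ball with integer radius; empty for negative radius.\<close>
definition ball :: "('a \<Rightarrow> 'a \<Rightarrow> bool) \<Rightarrow> int \<Rightarrow> 'a \<Rightarrow> 'a set" where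
  "ball E j x = {y. \<exists>n. gdist E x y = enat n \<and> int n \<le> j}"

definition dminus :: "('a \<Rightarrow> 'a \<Rightarrow> bool) \<Rightarrow> 'a \<Rightarrow> 'a \<Rightarrow> nat" where
  "dminus E x z = card {y. E y z \<and> gdist E y x < gdist E z x}"

definition SSP :: "('a \<Rightarrow> 'a \<Rightarrow> bool) \<Rightarrow> nat \<Rightarrow> 'a \<Rightarrow> bool" where
  "SSP E D x \<longleftrightarrow> card (sphere E 2 x) \<le> D choose 2"

definition NCP :: "('a \<Rightarrow> 'a \<Rightarrow> bool) \<Rightarrow> 'a \<Rightarrow> bool" where
  "NCP E x \<longleftrightarrow> ((\<forall>z\<in>sphere E 2 x. dminus E x z = 2) \<longrightarrow>
     (\<forall>y1\<in>sphere E 1 x. \<forall>y2\<in>sphere E 1 x. y1 \<noteq> y2 \<longrightarrow>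
        card {z\<in>sphere E 2 x. E y1 z \<and> E z y2} \<le> 1))"

definition hcube_adj :: "nat \<Rightarrow> nat set \<Rightarrow> nat set \<Rightarrow> bool" where
  "hcube_adj D A B \<longleftrightarrow> A \<subseteq> {1..D} \<and> B \<subseteq> {1..D} \<and> card ((A - B) \<union> (B - A)) = 1"

end

theory Submission
  imports Defs
begin



definition sd :: "'b set \<Rightarrow> 'b set \<Rightarrow> 'b set" where "sd A B = (A - B) \<union> (B - A)"

lemma card_sd: "finite A \<Longrightarrow> finite B \<Longrightarrow> card (sd A B) = card (A - B) + card (B - A)"
  unfolding sd_def by (subst card_Un_disjoint) auto

lemma card_diff_rel: "finite A \<Longrightarrow> finite B \<Longrightarrow> card A + card (B - A) = card B + card (A - B)"
proof -
  assume f: "finite A" "finite B"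
  have "card A = card (A \<inter> B) + card (A - B)" by (rule card_Int_Diff[OF f(1)])
  moreover have "card B = card (B \<inter> A) + card (B - A)" by (rule card_Int_Diff[OF f(2)])
  moreover have "B \<inter> A = A \<inter> B" by auto
  ultimately show ?thesis by simp
qed

lemma sd_one_sub: "finite A \<Longrightarrow> finite B \<Longrightarrow> card (sd A B) = 1 \<Longrightarrow> card A < card B \<Longrightarrow> A \<subseteq> B \<and> card B = Suc (card A)"
proof -
  assume a: "finite A" "finite B" "card (sd A B) = 1" "card A < card B"
  have "card (A - B) = 0" using card_sd[of A B] card_diff_rel[of A B] a by linarith
  hence "A - B = {}" using a by simp
  thus ?thesis using card_sd[of A B] card_diff_rel[of A B] a by auto
qed

lemma sd_sub_one: "finite B \<Longrightarrow> A \<subseteq> B \<Longrightarrow> card B = Suc (card A) \<Longrightarrow> card (sd A B) = 1"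
  using card_sd[of A B] card_diff_rel[of A B] by (auto simp: finite_subset)

lemma sd_same_card: "finite A \<Longrightarrow> finite B \<Longrightarrow> card A = card B \<Longrightarrow> card (sd A B) \<noteq> 1"
proof -
  assume a: "finite A" "finite B" "card A = card B"
  have "card (B - A) = card (A - B)" using card_diff_rel[of A B] a by linarith
  thus ?thesis using card_sd[of A B] a by presburger
qed

lemma sd_sym: "sd A B = sd B A" unfolding sd_def by auto

lemma hcube_adj_sd: "hcube_adj D A B \<longleftrightarrow> A \<subseteq> {1..D} \<and> B \<subseteq> {1..D} \<and> card (sd A B) = 1"
  unfolding hcube_adj_def sd_def by auto

lemma card_one_ex: "card S = 1 \<Longrightarrow> \<exists>e. S = {e}" by (simp add: card_1_singleton_iff)

lemma sd_assoc: "sd (sd A B) (sd B C) = sd A C" unfolding sd_def by auto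

lemma sd_single_eq: "sd W A = {e} \<Longrightarrow> W = sd A {e}" unfolding sd_def by blast

lemma common_two:
  assumes "finite A" "finite C" "card (sd A C) = 2"
  shows "finite {W. card (sd W A) = 1 \<and> card (sd W C) = 1} \<and> card {W. card (sd W A) = 1 \<and> card (sd W C) = 1} \<le> 2"
proof -
  have sub: "{W. card (sd W A) = 1 \<and> card (sd W C) = 1} \<subseteq> (\<lambda>e. sd A {e}) ` (sd A C)"
  proof
    fix W assume "W \<in> {W. card (sd W A) = 1 \<and> card (sd W C) = 1}"
    hence "card (sd W A) = 1" "card (sd W C) = 1" by auto
    then obtain e e' where e: "sd W A = {e}" "sd W C = {e'}" using card_one_ex by metis
    have "sd A C = sd (sd A W) (sd W C)" by (simp add: sd_assoc)
    also have "\<dots> = sd {e} {e'}" using e by (simp add: sd_sym)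
    finally have "sd A C = sd {e} {e'}" .
    hence "e \<in> sd A C" using assms(3) unfolding sd_def by (cases "e = e'") auto
    moreover have "W = sd A {e}" using e sd_single_eq by metis
    ultimately show "W \<in> (\<lambda>e. sd A {e}) ` (sd A C)" by blast
  qed
  moreover have "finite (sd A C)" using assms unfolding sd_def by auto
  ultimately have fin: "finite {W. card (sd W A) = 1 \<and> card (sd W C) = 1}" by (meson finite_imageI finite_subset)
  have "card {W. card (sd W A) = 1 \<and> card (sd W C) = 1} \<le> card ((\<lambda>e. sd A {e}) ` (sd A C))"
    using \<open>finite (sd A C)\<close> sub by (intro card_mono) auto
  also have "\<dots> \<le> card (sd A C)" using \<open>finite (sd A C)\<close> by (rule card_image_le)
  finally show ?thesis using assms(3) fin by simp
qed

lemma card_offdiag: "finite S \<Longrightarrow> card {(a,b). a \<in> S \<and> b \<in> S \<and> a \<noteq> b} = card S * (card S - 1)"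
proof -
  assume f: "finite S"
  have "{(a,b). a \<in> S \<and> b \<in> S \<and> a \<noteq> b} = (SIGMA a:S. S - {a})" by auto
  also have "card \<dots> = (\<Sum>a\<in>S. card (S - {a}))" using f by simp
  also have "\<dots> = card S * (card S - 1)" using f by simp
  finally show ?thesis .
qed

lemma binom_step: "(D choose j) * (D - j) = (D choose Suc j) * Suc j"
proof (cases D)
  case 0 then show ?thesis by simp
next
  case (Suc n)
  have "(D - j) * (D choose j) = D * ((D - 1) choose j)" by (rule binomial_absorb_comp)
  moreover have "Suc j * (D choose Suc j) = D * ((D - 1) choose j)"
    using times_binomial_minus1_eq[of "Suc j" D] by simp
  ultimately show ?thesis by (simp add: mult.commute)
qed

lemma comb:
  assumes fF: "finite F" and cF: "card F = Suc j" and j1: "1 \<le> j"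
    and cA: "\<And>A. A \<in> F \<Longrightarrow> finite A \<and> card A = j"
    and pr: "\<And>A B. A \<in> F \<Longrightarrow> B \<in> F \<Longrightarrow> A \<noteq> B \<Longrightarrow>
              \<exists>S. S \<subseteq> A \<inter> B \<and> card S = j - 1 \<and> card {C\<in>F. S \<subseteq> C} \<le> 2"
  shows "card (\<Union>F) = Suc j \<and> F = {A. A \<subseteq> \<Union>F \<and> card A = j}"
proof -
  have "F \<noteq> {}" using cF by auto
  then obtain A where A: "A \<in> F" by auto
  have "card (F - {A}) = j" using cF A fF by simp
  hence "F - {A} \<noteq> {}" using j1 by (metis card.empty not_one_le_zero)
  then obtain B where B: "B \<in> F - {A}" by auto
  have AB: "A \<in> F" "B \<in> F" "A \<noteq> B" using A B by auto
  have fA: "finite A" "card A = j" "finite B" "card B = j" using cA AB by auto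
  obtain S where S: "S \<subseteq> A \<inter> B" "card S = j - 1" "card {C\<in>F. S \<subseteq> C} \<le> 2" using pr AB by blast
  have "A \<inter> B \<noteq> A"
  proof
    assume "A \<inter> B = A" hence "A \<subseteq> B" by auto
    hence "A = B" using fA by (simp add: card_subset_eq)
    thus False using AB by simp
  qed
  hence "A \<inter> B \<subset> A" by auto
  hence "card (A \<inter> B) < j" using fA psubset_card_mono by metis
  moreover have "card S \<le> card (A \<inter> B)" using S fA by (intro card_mono) auto
  ultimately have cAB: "card (A \<inter> B) = j - 1" using S j1 by simp
  have SAB: "S = A \<inter> B" using S cAB fA by (intro card_subset_eq) auto
  define U where "U = A \<union> B"
  have fU: "finite U" using fA U_def by simp
  have cU: "card U = Suc j" unfolding U_def using card_Un_Int[of A B] fA cAB j1 by simp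
  have sub: "C \<subseteq> U" if C: "C \<in> F" for C
  proof (rule ccontr)
    assume "\<not> C \<subseteq> U"
    then obtain c where c: "c \<in> C" "c \<notin> U" by auto
    have CA: "C \<noteq> A" "C \<noteq> B" using c U_def by auto
    have fC: "finite C" "card C = j" using cA C by auto
    obtain S1 where S1: "S1 \<subseteq> A \<inter> C" "card S1 = j - 1" using pr[OF AB(1) C] CA by blast
    obtain S2 where S2: "S2 \<subseteq> B \<inter> C" "card S2 = j - 1" "card {D\<in>F. S2 \<subseteq> D} \<le> 2"
      using pr[OF AB(2) C] CA by blast
    have cC: "card (C - {c}) = j - 1" using fC c by simp
    have "S1 = C - {c}" using S1 c U_def fC cC by (intro card_subset_eq) auto
    moreover have "S2 = C - {c}" using S2 c U_def fC cC by (intro card_subset_eq) auto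
    ultimately have "S2 \<subseteq> A \<inter> B" using S1 S2(1) by auto
    hence "S2 = A \<inter> B" using S2 cAB fA by (intro card_subset_eq) auto
    hence "{A, B, C} \<subseteq> {D\<in>F. S2 \<subseteq> D}" using AB C S2 by auto
    hence "card {A, B, C} \<le> card {D\<in>F. S2 \<subseteq> D}" using fF by (intro card_mono) auto
    moreover have "card {A, B, C} = 3" using AB CA by auto
    ultimately show False using S2 by simp
  qed
  have UF: "\<Union>F = U" using sub AB U_def by auto
  have "F \<subseteq> {A. A \<subseteq> U \<and> card A = j}" using sub cA by auto
  moreover have "card {A. A \<subseteq> U \<and> card A = j} = Suc j" using n_subsets[OF fU, of j] cU by simp
  moreover have "finite {A. A \<subseteq> U \<and> card A = j}" using fU by simp
  ultimately have "F = {A. A \<subseteq> U \<and> card A = j}" using cF by (intro card_subset_eq) auto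
  thus ?thesis using UF cU by simp
qed




lemma walk_snoc: "walk E n x y \<Longrightarrow> E y z \<Longrightarrow> walk E (Suc n) x z"
  by (induction rule: walk.induct) (auto intro: walk.intros)

lemma walk_SucD: "walk E (Suc n) x z \<Longrightarrow> \<exists>y. walk E n x y \<and> E y z"
proof (induction n arbitrary: x)
  case 0
  then show ?case by (auto elim!: walk.cases intro: walk.intros)
next
  case (Suc n)
  from Suc.prems obtain y where "E x y" "walk E (Suc n) y z" by (auto elim: walk.cases)
  with Suc.IH obtain u where "walk E n y u" "E u z" by blast
  with \<open>E x y\<close> show ?case by (auto intro: walk.intros)
qed

lemma walk_rev: "(\<And>a b. E a b \<Longrightarrow> E b a) \<Longrightarrow> walk E n x y \<Longrightarrow> walk E n y x"
proof (induction n arbitrary: y)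
  case 0 then show ?case by (auto elim: walk.cases intro: walk.intros)
next
  case (Suc n)
  from walk_SucD[OF Suc.prems(2)] obtain u where "walk E n x u" "E u y" by blast
  with Suc show ?case by (auto intro: walk.intros)
qed

lemma walk0_iff: "walk E 0 x y \<longleftrightarrow> x = y"
  by (auto elim: walk.cases intro: walk.intros)

lemma walk1_iff: "walk E (Suc 0) x y \<longleftrightarrow> E x y"
  by (auto elim!: walk.cases intro: walk.intros)

lemma walk2_iff: "walk E 2 x y \<longleftrightarrow> (\<exists>w. E x w \<and> E w y)"
proof
  assume "walk E 2 x y"
  then obtain w where "E x w" "walk E (Suc 0) w y" by (auto simp: numeral_2_eq_2 elim: walk.cases)
  thus "\<exists>w. E x w \<and> E w y" by (auto simp: walk1_iff)
next
  assume "\<exists>w. E x w \<and> E w y"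
  thus "walk E 2 x y" by (auto simp: numeral_2_eq_2 intro!: walk.intros)
qed

lemma gdist_enat: "gdist E x y = enat n \<longleftrightarrow> walk E n x y \<and> (\<forall>m<n. \<not> walk E m x y)"
proof
  assume a: "gdist E x y = enat n"
  have ex: "\<exists>n. walk E n x y"
  proof (rule ccontr)
    assume "\<not> (\<exists>n. walk E n x y)"
    hence "gdist E x y = \<infinity>" unfolding gdist_def by (simp only: if_False)
    thus False using a by simp
  qed
  have "gdist E x y = enat (LEAST n. walk E n x y)" unfolding gdist_def using ex by (simp only: if_True)
  hence n: "n = (LEAST n. walk E n x y)" using a by simp
  have w: "walk E (LEAST n. walk E n x y) x y" by (rule LeastI_ex[OF ex])
  show "walk E n x y \<and> (\<forall>m<n. \<not> walk E m x y)"
    using w not_less_Least[of _ "\<lambda>n. walk E n x y"] n by blast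
next
  assume a: "walk E n x y \<and> (\<forall>m<n. \<not> walk E m x y)"
  hence l: "(LEAST n. walk E n x y) = n" by (intro Least_equality) (auto simp: not_less[symmetric])
  have ex: "\<exists>n. walk E n x y" using a by blast
  have "gdist E x y = enat (LEAST n. walk E n x y)" unfolding gdist_def using ex by (simp only: if_True)
  thus "gdist E x y = enat n" using l by simp
qed

lemma gdist_less: "gdist E x y < enat m \<longleftrightarrow> (\<exists>n<m. walk E n x y)"
proof (cases "\<exists>n. walk E n x y")
  case False
  hence "gdist E x y = \<infinity>" unfolding gdist_def by (simp only: if_False)
  thus ?thesis using False by simp
next
  case True
  hence g: "gdist E x y = enat (LEAST n. walk E n x y)" unfolding gdist_def by (simp only: if_True)
  have w: "walk E (LEAST n. walk E n x y) x y" by (rule LeastI_ex[OF True])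
  show ?thesis
  proof
    assume "gdist E x y < enat m"
    hence "(LEAST n. walk E n x y) < m" using g by simp
    thus "\<exists>n<m. walk E n x y" using w by blast
  next
    assume "\<exists>n<m. walk E n x y"
    then obtain n where n: "n < m" "walk E n x y" by blast
    hence "(LEAST n. walk E n x y) \<le> n" by (intro Least_le)
    thus "gdist E x y < enat m" using n g by simp
  qed
qed

lemma gdist_sym: "(\<And>a b. E a b \<Longrightarrow> E b a) \<Longrightarrow> gdist E x y = gdist E y x"
proof -
  assume s: "\<And>a b. E a b \<Longrightarrow> E b a"
  have "walk E n x y \<longleftrightarrow> walk E n y x" for n using walk_rev[of E, OF s] by blast
  thus ?thesis unfolding gdist_def by simp
qed

locale G =
  fixes V :: "'a set" and E :: "'a \<Rightarrow> 'a \<Rightarrow> bool" and D :: nat and x0 :: 'a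
  assumes sg: "simple_graph V E" and reg: "regular V E D" and bip: "bipartite V E" and x0V: "x0 \<in> V"
begin

lemma Esym: "E x y \<Longrightarrow> E y x" using sg unfolding simple_graph_def by blast
lemma Eirr: "\<not> E x x" using sg unfolding simple_graph_def by blast
lemma EV: "E x y \<Longrightarrow> x \<in> V \<and> y \<in> V" using sg unfolding simple_graph_def by blast
lemma nbr_fin: "x \<in> V \<Longrightarrow> finite {y. E x y}" using reg unfolding regular_def by blast
lemma nbr_card: "x \<in> V \<Longrightarrow> card {y. E x y} = D" using reg unfolding regular_def by blast

lemma gsym: "gdist E x y = gdist E y x" by (rule gdist_sym) (rule Esym)

lemma walk_col: "\<forall>x\<in>V. \<forall>y\<in>V. E x y \<longrightarrow> (c::'a\<Rightarrow>bool) x \<noteq> c y \<Longrightarrow> walk E n x y \<Longrightarrow> x \<in> V \<Longrightarrow>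
   y \<in> V \<and> (c y = c x \<longleftrightarrow> even n)"
proof (induction n arbitrary: y)
  case 0 then show ?case by (auto simp: walk0_iff)
next
  case (Suc n)
  from walk_SucD[OF Suc.prems(2)] obtain u where u: "walk E n x u" "E u y" by blast
  with Suc have "u \<in> V \<and> (c u = c x \<longleftrightarrow> even n)" by blast
  moreover have "y \<in> V" using EV u by blast
  moreover have "c u \<noteq> c y" using Suc.prems(1) u EV by blast
  ultimately show ?case by auto
qed

lemma no_tri: "E x w \<Longrightarrow> E w z \<Longrightarrow> \<not> E x z"
proof -
  assume a: "E x w" "E w z"
  obtain c :: "'a \<Rightarrow> bool" where c: "\<forall>x\<in>V. \<forall>y\<in>V. E x y \<longrightarrow> c x \<noteq> c y" using bip unfolding bipartite_def by blast
  have "c x \<noteq> c w" "c w \<noteq> c z" using c a EV by blast+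
  hence "c x = c z" by auto
  thus "\<not> E x z" using c EV by blast
qed

definition reach where "reach y \<longleftrightarrow> (\<exists>n. walk E n x0 y)"
definition lev where "lev y = (LEAST n. walk E n x0 y)"

lemma walk_lev: "walk E n x0 y \<Longrightarrow> lev y \<le> n" unfolding lev_def by (rule Least_le)
lemma reach_walk: "reach y \<Longrightarrow> walk E (lev y) x0 y" unfolding reach_def lev_def by (rule LeastI_ex)

lemma gdist_x0: "gdist E x0 y = enat n \<longleftrightarrow> reach y \<and> lev y = n"
  unfolding gdist_def reach_def lev_def by simp

lemma gdist_x0': "gdist E y x0 = enat n \<longleftrightarrow> reach y \<and> lev y = n"
  unfolding gsym[of y x0] by (rule gdist_x0)

lemma reach_x0: "reach x0" "lev x0 = 0"
  using walk_lev[of 0 x0] by (auto simp: reach_def walk0_iff intro: walk.intros)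

lemma lev0: "reach y \<Longrightarrow> lev y = 0 \<Longrightarrow> y = x0"
  using reach_walk walk0_iff by metis

lemma reach_V: "reach y \<Longrightarrow> y \<in> V"
proof -
  assume "reach y"
  obtain c :: "'a \<Rightarrow> bool" where c: "\<forall>x\<in>V. \<forall>y\<in>V. E x y \<longrightarrow> c x \<noteq> c y" using bip unfolding bipartite_def by blast
  show "y \<in> V" using walk_col[OF c reach_walk[OF \<open>reach y\<close>] x0V] by blast
qed

lemma lev_par: "reach y \<Longrightarrow> E y z \<Longrightarrow> lev y \<noteq> lev z"
proof
  assume a: "reach y" "E y z" "lev y = lev z"
  obtain c :: "'a \<Rightarrow> bool" where c: "\<forall>x\<in>V. \<forall>y\<in>V. E x y \<longrightarrow> c x \<noteq> c y" using bip unfolding bipartite_def by blast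
  have rz: "reach z" unfolding reach_def using walk_snoc[OF reach_walk[OF a(1)] a(2)] by blast
  have "c y = c x0 \<longleftrightarrow> even (lev y)" using walk_col[OF c reach_walk[OF a(1)] x0V] by blast
  moreover have "c z = c x0 \<longleftrightarrow> even (lev z)" using walk_col[OF c reach_walk[OF rz] x0V] by blast
  moreover have "c y \<noteq> c z" using c a EV by blast
  ultimately show False using a by auto
qed

lemma lev_adj: "reach y \<Longrightarrow> E y z \<Longrightarrow> reach z \<and> (lev z = Suc (lev y) \<or> lev y = Suc (lev z))"
proof -
  assume a: "reach y" "E y z"
  have w: "walk E (Suc (lev y)) x0 z" using walk_snoc[OF reach_walk[OF a(1)] a(2)] .
  hence rz: "reach z" unfolding reach_def by blast
  have "lev z \<le> Suc (lev y)" using walk_lev[OF w] .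
  moreover have "lev y \<le> Suc (lev z)" using walk_lev[OF walk_snoc[OF reach_walk[OF rz] Esym[OF a(2)]]] .
  moreover have "lev y \<noteq> lev z" using lev_par a by blast
  ultimately show ?thesis using rz by linarith
qed

lemma pred: "reach y \<Longrightarrow> lev y = Suc n \<Longrightarrow> \<exists>w. E w y \<and> reach w \<and> lev w = n"
proof -
  assume a: "reach y" "lev y = Suc n"
  obtain w where w: "walk E n x0 w" "E w y" using walk_SucD reach_walk[OF a(1)] a(2) by metis
  have rw: "reach w" unfolding reach_def using w by blast
  have "lev w \<le> n" using walk_lev w by blast
  moreover have "lev y \<le> Suc (lev w)" using walk_lev[OF walk_snoc[OF reach_walk[OF rw] w(2)]] .
  ultimately show ?thesis using w rw a by (intro exI[of _ w]) auto
qed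

lemma ball_x0: "ball E (int j) x0 = {y. reach y \<and> lev y \<le> j}"
  unfolding ball_def using gdist_x0 by auto

lemma ball_x0m2: "y \<in> ball E (int k - 2) x0 \<longleftrightarrow> reach y \<and> lev y + 2 \<le> k"
  unfolding ball_def using gdist_x0 by auto

lemma sphere2: "sphere E 2 x = {z. z \<noteq> x \<and> \<not> E x z \<and> (\<exists>w. E x w \<and> E w z)}"
proof (rule set_eqI)
  fix z
  have a: "(\<forall>m<2. \<not> walk E m x z) \<longleftrightarrow> \<not> walk E 0 x z \<and> \<not> walk E (Suc 0) x z"
    by (auto simp: less_Suc_eq numeral_2_eq_2)
  have "z \<in> sphere E 2 x \<longleftrightarrow> walk E 2 x z \<and> (\<forall>m<2. \<not> walk E m x z)"
    unfolding sphere_def by (simp add: gdist_enat)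
  also have "\<dots> \<longleftrightarrow> (\<exists>w. E x w \<and> E w z) \<and> x \<noteq> z \<and> \<not> E x z"
    unfolding a walk0_iff walk1_iff walk2_iff by blast
  finally show "z \<in> sphere E 2 x \<longleftrightarrow> z \<in> {z. z \<noteq> x \<and> \<not> E x z \<and> (\<exists>w. E x w \<and> E w z)}" by auto
qed

lemma sphere1: "sphere E 1 x = {y. E x y}"
proof (rule set_eqI)
  fix y
  have a: "(\<forall>m<1. \<not> walk E m x y) \<longleftrightarrow> \<not> walk E 0 x y" by auto
  have "y \<in> sphere E 1 x \<longleftrightarrow> walk E (Suc 0) x y \<and> (\<forall>m<1. \<not> walk E m x y)"
    unfolding sphere_def by (simp add: gdist_enat one_enat_def)
  thus "y \<in> sphere E 1 x \<longleftrightarrow> y \<in> {y. E x y}" unfolding a walk0_iff walk1_iff using Eirr by auto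
qed

lemma dminus2: "z \<in> sphere E 2 x \<Longrightarrow> dminus E x z = card {w. E x w \<and> E w z}"
proof -
  assume z: "z \<in> sphere E 2 x"
  have "gdist E z x = enat 2" using z gsym unfolding sphere_def by auto
  moreover have "gdist E y x < enat 2 \<longleftrightarrow> y = x \<or> E x y" for y
  proof -
    have "m < 2 \<longleftrightarrow> m = 0 \<or> m = Suc 0" for m :: nat by auto
    hence "gdist E y x < enat 2 \<longleftrightarrow> walk E 0 y x \<or> walk E (Suc 0) y x" unfolding gdist_less by metis
    thus ?thesis using walk0_iff walk1_iff Esym by metis
  qed
  moreover have "\<not> E x z" using z sphere2 by auto
  ultimately have "{y. E y z \<and> gdist E y x < gdist E z x} = {w. E x w \<and> E w z}" by auto
  thus ?thesis unfolding dminus_def by simp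
qed

definition down where "down y = {w. E y w \<and> Suc (lev w) = lev y}"
definition up where "up y = {w. E y w \<and> lev w = Suc (lev y)}"

lemma dminus_x0: "reach y \<Longrightarrow> dminus E x0 y = card (down y)"
proof -
  assume r: "reach y"
  have "{w. E w y \<and> gdist E w x0 < gdist E y x0} = down y"
  proof (rule set_eqI)
    fix w
    show "w \<in> {w. E w y \<and> gdist E w x0 < gdist E y x0} \<longleftrightarrow> w \<in> down y"
    proof (cases "E y w")
      case True
      hence rw: "reach w" using lev_adj r by blast
      have "gdist E w x0 = enat (lev w)" "gdist E y x0 = enat (lev y)" using gdist_x0' rw r by auto
      hence g: "gdist E w x0 < gdist E y x0 \<longleftrightarrow> lev w < lev y" by simp
      have d: "lev w = Suc (lev y) \<or> lev y = Suc (lev w)" using lev_adj[OF r True] by blast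
      have l: "lev w < lev y \<longleftrightarrow> Suc (lev w) = lev y" using d by linarith
      have "E w y" using Esym[OF True] .
      hence "w \<in> {w. E w y \<and> gdist E w x0 < gdist E y x0} \<longleftrightarrow> lev w < lev y" using g by simp
      moreover have "w \<in> down y \<longleftrightarrow> Suc (lev w) = lev y" using True unfolding down_def by simp
      ultimately show ?thesis using l by simp
    next
      case False
      hence "\<not> E w y" using Esym[of w y] by blast
      thus ?thesis using False unfolding down_def by auto
    qed
  qed
  thus ?thesis unfolding dminus_def by simp
qed

lemma nbr_split: assumes r: "reach y" shows "{w. E y w} = down y \<union> up y \<and> down y \<inter> up y = {}"
  unfolding down_def up_def using lev_adj[OF r] by fastforce

lemma fin_du: "reach y \<Longrightarrow> finite (down y) \<and> finite (up y)"
  using nbr_fin[OF reach_V] nbr_split by (metis finite_Un)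

lemma card_up: "reach y \<Longrightarrow> card (down y) = lev y \<Longrightarrow> card (up y) = D - lev y"
proof -
  assume r: "reach y" and c: "card (down y) = lev y"
  have "D = card (down y \<union> up y)" using nbr_card[OF reach_V[OF r]] nbr_split[OF r] by simp
  also have "\<dots> = card (down y) + card (up y)" using fin_du[OF r] nbr_split[OF r] by (simp add: card_Un_disjoint)
  finally show ?thesis using c by simp
qed

lemma fin_s2: "x \<in> V \<Longrightarrow> finite (sphere E 2 x)"
proof -
  assume x: "x \<in> V"
  have "sphere E 2 x \<subseteq> (\<Union>w\<in>{w. E x w}. {z. E w z})" using sphere2 by auto
  moreover have "finite (\<Union>w\<in>{w. E x w}. {z. E w z})" using nbr_fin x EV by auto
  ultimately show ?thesis by (rule finite_subset)
qed

lemma sum_s2: "x \<in> V \<Longrightarrow> (\<Sum>z\<in>sphere E 2 x. card {w. E x w \<and> E w z}) = D * (D - 1)"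
proof -
  assume x: "x \<in> V"
  let ?N = "{w. E x w}" and ?S = "sphere E 2 x"
  have fN: "finite ?N" using nbr_fin x by blast
  have fS: "finite ?S" using fin_s2 x by blast
  have "(\<Sum>z\<in>?S. card {w. E x w \<and> E w z}) = (\<Sum>z\<in>?S. card {w. w \<in> ?N \<and> E w z})" by simp
  also have "\<dots> = (\<Sum>z\<in>?S. \<Sum>w\<in>{w. w \<in> ?N \<and> E w z}. 1)" by simp
  also have "\<dots> = (\<Sum>w\<in>?N. \<Sum>z\<in>{z. z \<in> ?S \<and> E w z}. 1)"
    by (rule sum.swap_restrict[OF fS fN])
  also have "\<dots> = (\<Sum>w\<in>?N. D - 1)"
  proof (rule sum.cong[OF refl])
    fix w assume w: "w \<in> ?N"
    have wV: "w \<in> V" using w EV by blast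
    have "{z. z \<in> ?S \<and> E w z} = {z. E w z} - {x}"
      using w no_tri Esym unfolding sphere2 by blast
    hence "card {z. z \<in> ?S \<and> E w z} = D - 1" using nbr_card[OF wV] nbr_fin[OF wV] w Esym by simp
    thus "(\<Sum>z\<in>{z. z \<in> ?S \<and> E w z}. 1) = D - 1" by simp
  qed
  also have "\<dots> = D * (D - 1)" using nbr_card[OF x] by simp
  finally show ?thesis .
qed

end



context G begin
definition Bl where "Bl j = {y. reach y \<and> lev y \<le> j}"
definition Lv where "Lv i = {y. reach y \<and> lev y = i}"
definition T where "T j = {A. A \<subseteq> {1..D} \<and> card A \<le> j}"
definition L where "L i = {A. A \<subseteq> {1..D} \<and> card A = i}"
definition HC where "HC j \<Phi> \<longleftrightarrow> bij_betw \<Phi> (Bl j) (T j) \<and> (\<forall>x\<in>Bl j. card (\<Phi> x) = lev x) \<and>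
   (\<forall>x\<in>Bl j. \<forall>y\<in>Bl j. E x y \<longleftrightarrow> hcube_adj D (\<Phi> x) (\<Phi> y))"

lemma card_L: "card (L i) = D choose i"
  unfolding L_def using n_subsets[of "{1..D}" i] by simp

lemma fin_L: "finite (L i)" unfolding L_def by simp
lemma fin_T: "finite (T i)" unfolding T_def by simp
end

locale G2 = G +
  fixes k :: nat
  assumes hd: "\<forall>y\<in>ball E (int k) x0. enat (dminus E x0 y) = gdist E x0 y"
  and hs: "\<forall>x\<in>ball E (int k - 2) x0. SSP E D x \<and> NCP E x"
begin

lemma cdown: "reach y \<Longrightarrow> lev y \<le> k \<Longrightarrow> card (down y) = lev y"
proof -
  assume a: "reach y" "lev y \<le> k"
  hence "y \<in> ball E (int k) x0" using ball_x0 by auto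
  hence "enat (dminus E x0 y) = gdist E x0 y" using hd by blast
  moreover have "gdist E x0 y = enat (lev y)" using gdist_x0 a by blast
  ultimately show ?thesis using dminus_x0[OF a(1)] by simp
qed

lemma cup: "reach y \<Longrightarrow> lev y \<le> k \<Longrightarrow> card (up y) = D - lev y"
  using cdown card_up by blast

lemma ssp: "reach x \<Longrightarrow> lev x + 2 \<le> k \<Longrightarrow> card (sphere E 2 x) \<le> D choose 2"
  using hs ball_x0m2 unfolding SSP_def by blast

lemma ncp: "reach x \<Longrightarrow> lev x + 2 \<le> k \<Longrightarrow> NCP E x"
  using hs ball_x0m2 by blast

end

locale stp = G2 +
  fixes j :: nat and \<Phi> :: "'a \<Rightarrow> nat set"
  assumes j1: "1 \<le> j" and jk: "Suc j \<le> k" and hc: "HC j \<Phi>"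
begin

lemma inj: "inj_on \<Phi> (Bl j)" using hc unfolding HC_def bij_betw_def by blast
lemma img: "\<Phi> ` Bl j = T j" using hc unfolding HC_def bij_betw_def by blast
lemma cardP: "x \<in> Bl j \<Longrightarrow> card (\<Phi> x) = lev x" using hc unfolding HC_def by blast
lemma adjP: "x \<in> Bl j \<Longrightarrow> y \<in> Bl j \<Longrightarrow> E x y \<longleftrightarrow> hcube_adj D (\<Phi> x) (\<Phi> y)" using hc unfolding HC_def by blast

lemma subP: "x \<in> Bl j \<Longrightarrow> \<Phi> x \<subseteq> {1..D}" using img unfolding T_def by blast
lemma finP: "x \<in> Bl j \<Longrightarrow> finite (\<Phi> x)" using subP finite_subset by blast

lemma adj1: "x \<in> Bl j \<Longrightarrow> y \<in> Bl j \<Longrightarrow> E x y \<longleftrightarrow> card (sd (\<Phi> x) (\<Phi> y)) = 1"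
  using adjP subP hcube_adj_sd by blast

lemma downc: "x \<in> Bl j \<Longrightarrow> w \<in> Bl j \<Longrightarrow> lev w = Suc (lev x) \<Longrightarrow> E x w \<longleftrightarrow> \<Phi> x \<subseteq> \<Phi> w"
proof -
  assume a: "x \<in> Bl j" "w \<in> Bl j" "lev w = Suc (lev x)"
  have c: "card (\<Phi> w) = Suc (card (\<Phi> x))" using cardP a by simp
  show ?thesis
  proof
    assume "E x w"
    hence "card (sd (\<Phi> x) (\<Phi> w)) = 1" using adj1 a by blast
    thus "\<Phi> x \<subseteq> \<Phi> w" using sd_one_sub[of "\<Phi> x" "\<Phi> w"] finP a c by simp
  next
    assume "\<Phi> x \<subseteq> \<Phi> w"
    hence "card (sd (\<Phi> x) (\<Phi> w)) = 1" using sd_sub_one[of "\<Phi> w" "\<Phi> x"] finP a c by simp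
    thus "E x w" using adj1 a by blast
  qed
qed

lemma surjL: "i \<le> j \<Longrightarrow> A \<subseteq> {1..D} \<Longrightarrow> card A = i \<Longrightarrow> \<exists>x. reach x \<and> lev x = i \<and> \<Phi> x = A"
proof -
  assume a: "i \<le> j" "A \<subseteq> {1..D}" "card A = i"
  hence "A \<in> T j" unfolding T_def by simp
  then obtain x where "x \<in> Bl j" "\<Phi> x = A" using img by (metis imageE)
  thus ?thesis using cardP a unfolding Bl_def by auto
qed

lemma finBl: "finite (Bl j)"
proof -
  have "finite (T j)" by (rule fin_T)
  thus ?thesis using inj img by (metis finite_imageD)
qed

lemma finLv: "i \<le> j \<Longrightarrow> finite (Lv i)"
  using finBl unfolding Lv_def Bl_def by (rule finite_subset[rotated]) auto

lemma cardW: "card (Lv j) = D choose j"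
proof -
  have "\<Phi> ` Lv j = L j"
  proof
    show "\<Phi> ` Lv j \<subseteq> L j" using subP cardP unfolding Lv_def L_def Bl_def by auto
    show "L j \<subseteq> \<Phi> ` Lv j"
    proof
      fix A assume "A \<in> L j"
      hence "A \<subseteq> {1..D}" "card A = j" unfolding L_def by auto
      then obtain x where x: "reach x" "lev x = j" "\<Phi> x = A" using surjL[of j A] by blast
      hence "x \<in> Lv j" unfolding Lv_def by simp
      thus "A \<in> \<Phi> ` Lv j" using x(3) by blast
    qed
  qed
  moreover have "inj_on \<Phi> (Lv j)" using inj unfolding Lv_def Bl_def by (rule inj_on_subset) auto
  ultimately show ?thesis using card_L card_image by metis
qed

abbreviation "X \<equiv> Lv (j - 1)"
abbreviation "W \<equiv> Lv j"
abbreviation "Z \<equiv> Lv (Suc j)"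
definition C where "C x z = {w. E x w \<and> E w z}"
definition Q where "Q x z = {(a,b). a \<in> C x z \<and> b \<in> C x z \<and> a \<noteq> b}"

lemma XB: "x \<in> X \<Longrightarrow> x \<in> Bl j" unfolding Lv_def Bl_def by auto
lemma WB: "x \<in> W \<Longrightarrow> x \<in> Bl j" unfolding Lv_def Bl_def by auto

lemma finC: "reach x \<Longrightarrow> finite (C x z)"
proof -
  assume "reach x"
  hence "finite {w. E x w}" using nbr_fin reach_V by blast
  thus ?thesis unfolding C_def by (rule finite_subset[rotated]) auto
qed

lemma downZ: "z \<in> Z \<Longrightarrow> down z \<subseteq> W \<and> card (down z) = Suc j \<and> finite (down z)"
proof -
  assume z: "z \<in> Z"
  have "down z \<subseteq> W"
  proof
    fix w assume "w \<in> down z"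
    hence "E z w" "Suc (lev w) = lev z" unfolding down_def by auto
    moreover have "reach w" using lev_adj \<open>E z w\<close> z unfolding Lv_def by blast
    ultimately show "w \<in> W" using z unfolding Lv_def by auto
  qed
  moreover have "card (down z) = Suc j" using cdown z jk unfolding Lv_def by auto
  moreover have "finite (down z)" using fin_du z unfolding Lv_def by blast
  ultimately show ?thesis by blast
qed

lemma upW: "w \<in> W \<Longrightarrow> up w \<subseteq> Z \<and> card (up w) = D - j \<and> finite (up w)"
proof -
  assume w: "w \<in> W"
  have "up w \<subseteq> Z"
  proof
    fix z assume "z \<in> up w"
    hence "E w z" "lev z = Suc (lev w)" unfolding up_def by auto
    moreover have "reach z" using lev_adj \<open>E w z\<close> w unfolding Lv_def by blast
    ultimately show "z \<in> Z" using w unfolding Lv_def by auto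
  qed
  moreover have "card (up w) = D - j" using cup w jk unfolding Lv_def by auto
  moreover have "finite (up w)" using fin_du w unfolding Lv_def by blast
  ultimately show ?thesis by blast
qed

lemma finZ: "finite Z"
proof -
  have "Z \<subseteq> (\<Union>w\<in>W. up w)"
  proof
    fix z assume z: "z \<in> Z"
    then obtain w where w: "E w z" "reach w" "lev w = j" using pred unfolding Lv_def by blast
    hence "z \<in> up w" using z unfolding up_def Lv_def by auto
    thus "z \<in> (\<Union>w\<in>W. up w)" using w unfolding Lv_def by blast
  qed
  moreover have "finite (\<Union>w\<in>W. up w)" using finLv[of j] upW by blast
  ultimately show ?thesis by (rule finite_subset)
qed

lemma Xfacts: "x \<in> X \<Longrightarrow> x \<in> V \<and> finite (sphere E 2 x) \<and> card (sphere E 2 x) \<le> D choose 2 \<and>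
   (\<Sum>z\<in>sphere E 2 x. card (C x z)) = D * (D - 1)"
proof -
  assume x: "x \<in> X"
  have r: "reach x" "lev x + 2 \<le> k" using x jk j1 unfolding Lv_def by auto
  show ?thesis using reach_V[OF r(1)] fin_s2 ssp[OF r] sum_s2 unfolding C_def by blast
qed

lemma N2lev: "x \<in> X \<Longrightarrow> z \<in> sphere E 2 x \<Longrightarrow> reach z \<and> lev z \<le> Suc j"
proof -
  assume x: "x \<in> X" and z: "z \<in> sphere E 2 x"
  then obtain w where w: "E x w" "E w z" using sphere2 by blast
  have rx: "reach x" "lev x = j - 1" using x unfolding Lv_def by auto
  have "reach w \<and> lev w \<le> j" using lev_adj[OF rx(1) w(1)] rx j1 by auto
  thus ?thesis using lev_adj[of w z] w by auto
qed

lemma Cle2: "x \<in> X \<Longrightarrow> z \<in> sphere E 2 x \<Longrightarrow> lev z \<le> j \<Longrightarrow> card (C x z) \<le> 2"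
proof -
  assume x: "x \<in> X" and z: "z \<in> sphere E 2 x" and lz: "lev z \<le> j"
  have rx: "reach x" "lev x = j - 1" using x unfolding Lv_def by auto
  have zB: "z \<in> Bl j" using N2lev[OF x z] lz unfolding Bl_def by auto
  have xB: "x \<in> Bl j" using XB x by blast
  have CB: "C x z \<subseteq> Bl j"
  proof
    fix w assume "w \<in> C x z"
    hence "E x w" unfolding C_def by blast
    thus "w \<in> Bl j" using lev_adj[OF rx(1)] rx j1 unfolding Bl_def by fastforce
  qed
  obtain w0 where w0: "E x w0" "E w0 z" using z sphere2 by blast
  have w0B: "w0 \<in> Bl j" using CB w0 unfolding C_def by blast
  obtain e where e: "sd (\<Phi> x) (\<Phi> w0) = {e}" using adj1[OF xB w0B] w0 card_one_ex by metis
  obtain e' where e': "sd (\<Phi> w0) (\<Phi> z) = {e'}" using adj1[OF w0B zB] w0 card_one_ex by metis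
  have s: "sd (\<Phi> x) (\<Phi> z) = sd {e} {e'}" using sd_assoc[of "\<Phi> x" "\<Phi> w0" "\<Phi> z"] e e' by simp
  have "x \<noteq> z" using z sphere2 by blast
  hence "\<Phi> x \<noteq> \<Phi> z" using inj xB zB inj_on_def by metis
  hence "sd (\<Phi> x) (\<Phi> z) \<noteq> {}" unfolding sd_def by blast
  hence "e \<noteq> e'" using s unfolding sd_def by auto
  hence "sd {e} {e'} = {e, e'}" unfolding sd_def by auto
  hence c2: "card (sd (\<Phi> x) (\<Phi> z)) = 2" using s \<open>e \<noteq> e'\<close> by simp
  have "\<Phi> ` C x z \<subseteq> {V'. card (sd V' (\<Phi> x)) = 1 \<and> card (sd V' (\<Phi> z)) = 1}"
  proof
    fix A assume "A \<in> \<Phi> ` C x z"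
    then obtain w where w: "w \<in> C x z" "A = \<Phi> w" by blast
    have wB: "w \<in> Bl j" using CB w by blast
    have "card (sd (\<Phi> x) (\<Phi> w)) = 1" using adj1[OF xB wB] w unfolding C_def by blast
    moreover have "card (sd (\<Phi> w) (\<Phi> z)) = 1" using adj1[OF wB zB] w unfolding C_def by blast
    ultimately show "A \<in> {V'. card (sd V' (\<Phi> x)) = 1 \<and> card (sd V' (\<Phi> z)) = 1}"
      using w sd_sym[of "\<Phi> x" "\<Phi> w"] by simp
  qed
  hence "card (\<Phi> ` C x z) \<le> card {V'. card (sd V' (\<Phi> x)) = 1 \<and> card (sd V' (\<Phi> z)) = 1}"
    using common_two[OF finP[OF xB] finP[OF zB] c2] by (intro card_mono) auto
  also have "\<dots> \<le> 2" using common_two[OF finP[OF xB] finP[OF zB] c2] by blast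
  finally have "card (\<Phi> ` C x z) \<le> 2" .
  moreover have "inj_on \<Phi> (C x z)" using inj CB by (rule inj_on_subset)
  ultimately show ?thesis using card_image by metis
qed

end



context stp begin

definition Xz where "Xz z = {x\<in>X. z \<in> sphere E 2 x}"

lemma finX: "finite X" using finLv[of "j - 1"] by simp
lemma finXz: "finite (Xz z)" unfolding Xz_def using finX by simp

lemma levs: assumes x: "x \<in> X" and z: "z \<in> Z" and xw: "E x w" and wz: "E w z"
  shows "reach w \<and> lev w = j"
proof -
  have rx: "reach x" "lev x = j - 1" using x unfolding Lv_def by auto
  have rz: "reach z" "lev z = Suc j" using z unfolding Lv_def by auto
  have a: "reach w" "lev w = Suc (lev x) \<or> lev x = Suc (lev w)" using lev_adj[OF rx(1) xw] by auto
  have b: "lev z = Suc (lev w) \<or> lev w = Suc (lev z)" using lev_adj[OF a(1) wz] by auto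
  show ?thesis using a b rx rz j1 by linarith
qed

lemma C_down: "z \<in> Z \<Longrightarrow> x \<in> X \<Longrightarrow> C x z \<subseteq> down z"
proof
  fix w assume z: "z \<in> Z" and x: "x \<in> X" and w: "w \<in> C x z"
  have e: "E x w" "E w z" using w unfolding C_def by auto
  have "reach w \<and> lev w = j" using levs[OF x z e] .
  moreover have "E z w" using Esym[OF e(2)] .
  ultimately show "w \<in> down z" using z unfolding down_def Lv_def by auto
qed

lemma XzC: assumes z: "z \<in> Z"
  shows "(SIGMA x:Xz z. C x z) = (\<lambda>(w,x). (x,w)) ` (SIGMA w:down z. down w)"
proof
  show "(SIGMA x:Xz z. C x z) \<subseteq> (\<lambda>(w,x). (x,w)) ` (SIGMA w:down z. down w)"
  proof
    fix p assume "p \<in> (SIGMA x:Xz z. C x z)"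
    then obtain x w where p: "p = (x,w)" "x \<in> Xz z" "w \<in> C x z" by blast
    have x: "x \<in> X" using p unfolding Xz_def by blast
    have e: "E x w" "E w z" using p unfolding C_def by auto
    have lw: "reach w \<and> lev w = j" using levs[OF x z e] .
    have "w \<in> down z" using C_down[OF z x] p by blast
    moreover have "x \<in> down w" using Esym[OF e(1)] lw x j1 unfolding down_def Lv_def by auto
    ultimately show "p \<in> (\<lambda>(w,x). (x,w)) ` (SIGMA w:down z. down w)" using p by force
  qed
next
  show "(\<lambda>(w,x). (x,w)) ` (SIGMA w:down z. down w) \<subseteq> (SIGMA x:Xz z. C x z)"
  proof
    fix p assume "p \<in> (\<lambda>(w,x). (x,w)) ` (SIGMA w:down z. down w)"
    then obtain q where q: "q \<in> (SIGMA w:down z. down w)" "p = (\<lambda>(w,x). (x,w)) q" by blast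
    then obtain w x where p: "p = (x,w)" "w \<in> down z" "x \<in> down w" by (cases q) auto
    have rz: "reach z" "lev z = Suc j" using z unfolding Lv_def by auto
    have e1: "E z w" "Suc (lev w) = lev z" using p unfolding down_def by auto
    have rw: "reach w" using lev_adj[OF rz(1) e1(1)] by blast
    have e2: "E w x" "Suc (lev x) = lev w" using p unfolding down_def by auto
    have rx: "reach x" using lev_adj[OF rw e2(1)] by blast
    have lx: "lev x = j - 1" using e1 e2 rz by simp
    have x: "x \<in> X" using rx lx unfolding Lv_def by auto
    have "x \<noteq> z" using lx rz j1 by auto
    moreover have "\<not> E x z"
    proof
      assume "E x z"
      hence "lev z = Suc (lev x) \<or> lev x = Suc (lev z)" using lev_adj[OF rx] by blast
      thus False using lx rz j1 by linarith
    qed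
    moreover have "E x w" "E w z" using Esym[OF e1(1)] Esym[OF e2(1)] by auto
    ultimately have "z \<in> sphere E 2 x" "w \<in> C x z" unfolding sphere2 C_def by auto
    thus "p \<in> (SIGMA x:Xz z. C x z)" using p x unfolding Xz_def by auto
  qed
qed

lemma sumC_z: assumes z: "z \<in> Z" shows "(\<Sum>x\<in>Xz z. card (C x z)) = Suc j * j"
proof -
  have fC: "\<forall>x\<in>Xz z. finite (C x z)" using finC unfolding Xz_def Lv_def by auto
  have "(\<Sum>x\<in>Xz z. card (C x z)) = card (SIGMA x:Xz z. C x z)" using finXz fC by simp
  also have "\<dots> = card ((\<lambda>(w,x). (x,w)) ` (SIGMA w:down z. down w))" using XzC[OF z] by simp
  also have "\<dots> = card (SIGMA w:down z. down w)" by (rule card_image) (auto simp: inj_on_def)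
  also have "\<dots> = (\<Sum>w\<in>down z. card (down w))"
    using downZ[OF z] fin_du unfolding Lv_def by (intro card_SigmaI) auto
  also have "\<dots> = (\<Sum>w\<in>down z. j)"
  proof (rule sum.cong[OF refl])
    fix w assume "w \<in> down z"
    hence "w \<in> W" using downZ[OF z] by blast
    thus "card (down w) = j" using cdown jk unfolding Lv_def by auto
  qed
  also have "\<dots> = Suc j * j" using downZ[OF z] by simp
  finally show ?thesis .
qed

lemma uniq: assumes "a \<in> W" "b \<in> W" "a \<noteq> b" "x \<in> X" "x' \<in> X"
  "E x a" "E x b" "E x' a" "E x' b" shows "x = x'"
proof -
  have aB: "a \<in> Bl j" "b \<in> Bl j" using WB assms by auto
  have xB: "x \<in> Bl j" "x' \<in> Bl j" using XB assms by auto
  have la: "lev a = Suc (lev x)" "lev b = Suc (lev x)" "lev a = Suc (lev x')" "lev b = Suc (lev x')"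
    using assms j1 unfolding Lv_def by auto
  have s: "\<Phi> x \<subseteq> \<Phi> a" "\<Phi> x \<subseteq> \<Phi> b" "\<Phi> x' \<subseteq> \<Phi> a" "\<Phi> x' \<subseteq> \<Phi> b"
    using downc[OF xB(1) aB(1) la(1)] downc[OF xB(1) aB(2) la(2)]
      downc[OF xB(2) aB(1) la(3)] downc[OF xB(2) aB(2) la(4)] assms by auto
  have ca: "card (\<Phi> a) = j" "card (\<Phi> b) = j" using cardP aB assms unfolding Lv_def by auto
  have cx: "card (\<Phi> x) = j - 1" "card (\<Phi> x') = j - 1" using cardP xB assms unfolding Lv_def by auto
  have "\<Phi> a \<noteq> \<Phi> b" using inj aB assms(3) unfolding inj_on_def by blast
  hence "\<not> \<Phi> a \<subseteq> \<Phi> b" using ca finP aB card_subset_eq by metis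
  hence "\<Phi> a \<inter> \<Phi> b \<subset> \<Phi> a" by auto
  hence "card (\<Phi> a \<inter> \<Phi> b) < j" using ca finP[OF aB(1)] psubset_card_mono by metis
  hence cI: "card (\<Phi> a \<inter> \<Phi> b) \<le> j - 1" by simp
  have fI: "finite (\<Phi> a \<inter> \<Phi> b)" using finP[OF aB(1)] by simp
  have "\<Phi> x = \<Phi> a \<inter> \<Phi> b" using s cx cI fI
    by (metis card_mono card_subset_eq le_antisym le_inf_iff)
  moreover have "\<Phi> x' = \<Phi> a \<inter> \<Phi> b" using s cx cI fI
    by (metis card_mono card_subset_eq le_antisym le_inf_iff)
  ultimately show ?thesis using inj xB unfolding inj_on_def by metis
qed

lemma Qcard: "finite S0 \<Longrightarrow> card {(a,b). a \<in> S0 \<and> b \<in> S0 \<and> a \<noteq> b} = card S0 * (card S0 - 1)"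
  by (rule card_offdiag)

lemma sumQ_z: assumes z: "z \<in> Z"
  shows "(\<Sum>x\<in>Xz z. card (Q x z)) \<le> Suc j * j \<and>
   ((\<Sum>x\<in>Xz z. card (Q x z)) = Suc j * j \<longrightarrow>
     (\<forall>a\<in>down z. \<forall>b\<in>down z. a \<noteq> b \<longrightarrow> (\<exists>x\<in>Xz z. a \<in> C x z \<and> b \<in> C x z)))"
proof -
  define S where "S = (SIGMA x:Xz z. Q x z)"
  define P where "P = {(a,b). a \<in> down z \<and> b \<in> down z \<and> a \<noteq> b}"
  have fQ: "\<forall>x\<in>Xz z. finite (Q x z)"
  proof
    fix x assume "x \<in> Xz z"
    hence "finite (C x z)" using finC unfolding Xz_def Lv_def by auto
    hence "finite (C x z \<times> C x z)" by simp
    thus "finite (Q x z)" unfolding Q_def by (rule finite_subset[rotated]) auto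
  qed
  have sumS: "(\<Sum>x\<in>Xz z. card (Q x z)) = card S" unfolding S_def using finXz fQ by simp
  have "P \<subseteq> down z \<times> down z" unfolding P_def by blast
  moreover have "finite (down z \<times> down z)" using downZ[OF z] by blast
  ultimately have fP: "finite P" by (rule finite_subset)
  have cP: "card P = Suc j * j" unfolding P_def using card_offdiag[of "down z"] downZ[OF z] by simp
  have injS: "inj_on snd S"
  proof (rule inj_onI)
    fix p q assume p: "p \<in> S" and q: "q \<in> S" and e: "snd p = snd q"
    obtain x a b where pp: "p = (x,(a,b))" "x \<in> Xz z" "a \<in> C x z" "b \<in> C x z" "a \<noteq> b"
      using p unfolding S_def Q_def by auto
    obtain x' a' b' where qq: "q = (x',(a',b'))" "x' \<in> Xz z" "a' \<in> C x' z" "b' \<in> C x' z" "a' \<noteq> b'"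
      using q unfolding S_def Q_def by auto
    have ab: "a' = a" "b' = b" using e pp qq by auto
    have xX: "x \<in> X" "x' \<in> X" using pp qq unfolding Xz_def by auto
    have "a \<in> W" "b \<in> W" using C_down[OF z xX(1)] pp downZ[OF z] by auto
    hence "x = x'" using uniq[of a b x x'] pp qq ab xX unfolding C_def by auto
    thus "p = q" using pp qq ab by simp
  qed
  have imS: "snd ` S \<subseteq> P"
  proof
    fix r assume "r \<in> snd ` S"
    then obtain x a b where r: "r = (a,b)" "x \<in> Xz z" "a \<in> C x z" "b \<in> C x z" "a \<noteq> b"
      unfolding S_def Q_def by auto
    have "x \<in> X" using r unfolding Xz_def by auto
    thus "r \<in> P" using C_down[OF z] r unfolding P_def by auto
  qed
  have cS: "card S = card (snd ` S)" using card_image[OF injS] by simp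
  have le: "card (snd ` S) \<le> card P" using card_mono[OF fP imS] .
  show ?thesis
  proof (intro conjI impI ballI)
    show "(\<Sum>x\<in>Xz z. card (Q x z)) \<le> Suc j * j" using sumS cS le cP by simp
  next
    fix a b assume eq: "(\<Sum>x\<in>Xz z. card (Q x z)) = Suc j * j" and a: "a \<in> down z" and b: "b \<in> down z"
      and ne: "a \<noteq> b"
    have "snd ` S = P" using card_subset_eq[OF fP imS] sumS cS cP eq by simp
    hence "(a,b) \<in> snd ` S" using a b ne unfolding P_def by auto
    then obtain x where "x \<in> Xz z" "(a,b) \<in> Q x z" unfolding S_def by auto
    thus "\<exists>x\<in>Xz z. a \<in> C x z \<and> b \<in> C x z" unfolding Q_def by auto
  qed
qed

end



lemma two_choose: "2 * (n choose 2) = n * (n - 1)"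
proof -
  have "even (n * (n - 1))" by (cases "even n") auto
  thus ?thesis by (simp add: choose_two)
qed

lemma nat_quad: "(c::nat) \<ge> 1 \<Longrightarrow> 2 * c \<le> c * (c - 1) + 2"
proof -
  assume c: "c \<ge> 1"
  consider "c = 1" | "c = 2" | "c \<ge> 3" using c by linarith
  thus ?thesis
  proof cases
    case 3
    hence "2 \<le> c - 1" by simp
    hence "c * 2 \<le> c * (c - 1)" by (rule mult_le_mono2)
    thus ?thesis by linarith
  qed auto
qed

lemma nat_quad_eq: "(c::nat) \<ge> 1 \<Longrightarrow> 2 * c = c * (c - 1) + 2 \<Longrightarrow> c \<le> 2"
proof (rule ccontr)
  assume c: "c \<ge> 1" "2 * c = c * (c - 1) + 2" "\<not> c \<le> 2"
  hence "2 \<le> c - 1" by simp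
  hence "c * 2 \<le> c * (c - 1)" by (rule mult_le_mono2)
  thus False using c(2) by linarith
qed

context stp begin

lemma QC: "reach x \<Longrightarrow> card (Q x z) = card (C x z) * (card (C x z) - 1)"
  unfolding Q_def using card_offdiag[OF finC] by simp

definition R where "R = (SIGMA x:X. sphere E 2 x)"
definition R1 where "R1 = (SIGMA x:X. {z\<in>sphere E 2 x. lev z \<le> j})"
definition R2 where "R2 = (SIGMA x:X. {z\<in>Z. z \<in> sphere E 2 x})"

lemma finN: "x \<in> X \<Longrightarrow> finite (sphere E 2 x)" using Xfacts by blast

lemma finR: "finite R" unfolding R_def using finX finN by (intro finite_SigmaI) auto

lemma R_split: "R = R1 \<union> R2" "R1 \<inter> R2 = {}"
proof -
  show "R = R1 \<union> R2"
  proof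
    show "R \<subseteq> R1 \<union> R2"
    proof
      fix p assume "p \<in> R"
      then obtain x z where p: "p = (x,z)" "x \<in> X" "z \<in> sphere E 2 x" unfolding R_def by blast
      have "reach z \<and> lev z \<le> Suc j" using N2lev p by blast
      hence "lev z \<le> j \<or> z \<in> Z" unfolding Lv_def by auto
      thus "p \<in> R1 \<union> R2" using p unfolding R1_def R2_def by auto
    qed
    show "R1 \<union> R2 \<subseteq> R" unfolding R_def R1_def R2_def by auto
  qed
  show "R1 \<inter> R2 = {}" unfolding R1_def R2_def Lv_def by auto
qed

lemma finR12: "finite R1" "finite R2" using finR R_split(1) by auto

lemma sumR: "(\<Sum>p\<in>R. f p) = (\<Sum>x\<in>X. \<Sum>z\<in>sphere E 2 x. f (x,z))"
  unfolding R_def using sum.Sigma[of X "\<lambda>x. sphere E 2 x" "\<lambda>x z. f (x,z)"] finX finN by simp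

lemma sumR2: "(\<Sum>p\<in>R2. f p) = (\<Sum>z\<in>Z. \<Sum>x\<in>Xz z. f (x,z))"
proof -
  have fin2: "\<forall>x\<in>X. finite {z\<in>Z. z \<in> sphere E 2 x}" using finZ by simp
  have "(\<Sum>p\<in>R2. f p) = (\<Sum>x\<in>X. \<Sum>z\<in>{z. z \<in> Z \<and> z \<in> sphere E 2 x}. f (x,z))"
    unfolding R2_def using sum.Sigma[of X "\<lambda>x. {z\<in>Z. z \<in> sphere E 2 x}" "\<lambda>x z. f (x,z)"] finX fin2 by simp
  also have "\<dots> = (\<Sum>z\<in>Z. \<Sum>x\<in>{x. x \<in> X \<and> z \<in> sphere E 2 x}. f (x,z))"
    by (rule sum.swap_restrict[OF finX finZ])
  finally show ?thesis unfolding Xz_def by simp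
qed

lemma cR_ge1: "p \<in> R \<Longrightarrow> card (C (fst p) (snd p)) \<ge> 1"
proof -
  assume "p \<in> R"
  then obtain x z where p: "p = (x,z)" "x \<in> X" "z \<in> sphere E 2 x" unfolding R_def by blast
  then obtain w where "E x w" "E w z" using sphere2 by blast
  hence "C x z \<noteq> {}" unfolding C_def by blast
  moreover have "finite (C x z)" using finC p unfolding Lv_def by auto
  ultimately show ?thesis using p by (simp add: Suc_le_eq card_gt_0_iff)
qed

lemma c_two: assumes p: "p \<in> R" shows "card (C (fst p) (snd p)) = 2"
proof -
  define c where "c p = card (C (fst p) (snd p))" for p
  define g where "g p = card (Q (fst p) (snd p))" for p
  have gc: "g p = c p * (c p - 1)" if pR: "p \<in> R" for p
  proof -
    obtain x z where "p = (x,z)" "x \<in> X" using pR unfolding R_def by blast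
    thus ?thesis unfolding g_def c_def using QC unfolding Lv_def by auto
  qed
  have a: "(\<Sum>p\<in>R. 2) \<le> (\<Sum>p\<in>R. c p)"
  proof -
    have "(\<Sum>p\<in>R. (2::nat)) = (\<Sum>x\<in>X. \<Sum>z\<in>sphere E 2 x. 2)" by (rule sumR)
    also have "\<dots> = (\<Sum>x\<in>X. 2 * card (sphere E 2 x))" by (simp add: mult.commute)
    also have "\<dots> \<le> (\<Sum>x\<in>X. 2 * (D choose 2))" using Xfacts by (intro sum_mono) auto
    also have "\<dots> = (\<Sum>x\<in>X. \<Sum>z\<in>sphere E 2 x. c (x,z))"
      using Xfacts two_choose unfolding c_def by (intro sum.cong) auto
    also have "\<dots> = (\<Sum>p\<in>R. c p)" by (rule sumR[symmetric])
    finally show ?thesis .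
  qed
  have b: "(\<Sum>p\<in>R. g p) \<le> (\<Sum>p\<in>R. c p)"
  proof -
    have "(\<Sum>p\<in>R1. g p) \<le> (\<Sum>p\<in>R1. c p)"
    proof (rule sum_mono)
      fix p assume p1: "p \<in> R1"
      then obtain x z where p: "p = (x,z)" "x \<in> X" "z \<in> sphere E 2 x" "lev z \<le> j" unfolding R1_def by blast
      have pR: "p \<in> R" using p1 R_split by blast
      have "c p \<le> 2" using Cle2 p unfolding c_def by simp
      hence "c p * (c p - 1) \<le> c p" by (cases "c p") (auto simp: le_Suc_eq)
      thus "g p \<le> c p" using gc pR by simp
    qed
    moreover have "(\<Sum>p\<in>R2. g p) \<le> (\<Sum>p\<in>R2. c p)"
    proof -
      have "(\<Sum>p\<in>R2. g p) = (\<Sum>z\<in>Z. \<Sum>x\<in>Xz z. card (Q x z))" unfolding g_def by (simp add: sumR2)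
      also have "\<dots> \<le> (\<Sum>z\<in>Z. \<Sum>x\<in>Xz z. card (C x z))"
      proof (rule sum_mono)
        fix z assume z: "z \<in> Z"
        show "(\<Sum>x\<in>Xz z. card (Q x z)) \<le> (\<Sum>x\<in>Xz z. card (C x z))"
          using conjunct1[OF sumQ_z[OF z]] sumC_z[OF z] by simp
      qed
      also have "\<dots> = (\<Sum>p\<in>R2. c p)" unfolding c_def by (simp add: sumR2)
      finally show ?thesis .
    qed
    ultimately show ?thesis using R_split finR12 by (simp add: sum.union_disjoint)
  qed
  have pw: "2 * c p \<le> g p + 2" if "p \<in> R" for p
    using nat_quad[OF cR_ge1[OF that]] gc[OF that] unfolding c_def by simp
  have "(\<Sum>p\<in>R. 2 * c p) \<le> (\<Sum>p\<in>R. g p + 2)" using pw by (rule sum_mono)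
  moreover have "(\<Sum>p\<in>R. g p + 2) \<le> (\<Sum>p\<in>R. 2 * c p)"
  proof -
    have "(\<Sum>p\<in>R. g p + 2) = (\<Sum>p\<in>R. g p) + (\<Sum>p\<in>R. 2)" by (rule sum.distrib)
    also have "\<dots> \<le> (\<Sum>p\<in>R. c p) + (\<Sum>p\<in>R. c p)" using a b by linarith
    also have "\<dots> = (\<Sum>p\<in>R. 2 * c p)" by (simp add: sum.distrib[symmetric] mult_2)
    finally show ?thesis .
  qed
  ultimately have "(\<Sum>p\<in>R. 2 * c p) = (\<Sum>p\<in>R. g p + 2)" by simp
  hence eq: "2 * c q = g q + 2" if "q \<in> R" for q using sum_mono_inv[OF _ pw that finR] by simp
  have le2: "c q \<le> 2" if "q \<in> R" for q
    using nat_quad_eq[OF cR_ge1[OF that]] eq[OF that] gc[OF that] unfolding c_def by simp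
  have "(\<Sum>p\<in>R. c p) \<le> (\<Sum>p\<in>R. 2)" using le2 by (rule sum_mono)
  hence "(\<Sum>p\<in>R. c p) = (\<Sum>p\<in>R. 2)" using a by simp
  hence "c p = 2" using sum_mono_inv[OF _ le2 p finR] by simp
  thus ?thesis unfolding c_def .
qed

lemma c2: "x \<in> X \<Longrightarrow> z \<in> sphere E 2 x \<Longrightarrow> card (C x z) = 2"
  using c_two[of "(x,z)"] unfolding R_def by simp

lemma dm2: "x \<in> X \<Longrightarrow> \<forall>z\<in>sphere E 2 x. dminus E x z = 2"
  using c2 dminus2 unfolding C_def by simp

lemma cover: assumes z: "z \<in> Z" and a: "a \<in> down z" and b: "b \<in> down z" and ne: "a \<noteq> b"
  shows "\<exists>x\<in>X. z \<in> sphere E 2 x \<and> a \<in> C x z \<and> b \<in> C x z \<and> card (C x z) = 2"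
proof -
  have "(\<Sum>x\<in>Xz z. card (Q x z)) = (\<Sum>x\<in>Xz z. card (C x z))"
  proof (rule sum.cong[OF refl])
    fix x assume "x \<in> Xz z"
    hence x: "x \<in> X" "z \<in> sphere E 2 x" unfolding Xz_def by auto
    show "card (Q x z) = card (C x z)" using QC[of x z] c2[OF x] x unfolding Lv_def by simp
  qed
  hence "(\<Sum>x\<in>Xz z. card (Q x z)) = Suc j * j" using sumC_z[OF z] by simp
  then obtain x where "x \<in> Xz z" "a \<in> C x z" "b \<in> C x z" using sumQ_z[OF z] a b ne by blast
  thus ?thesis using c2 unfolding Xz_def by blast
qed

end



lemma hc_sym: "hcube_adj D A B \<longleftrightarrow> hcube_adj D B A"
  unfolding hcube_adj_sd using sd_sym by metis

context stp begin

definition Psi where "Psi z = \<Union> (\<Phi> ` down z)"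

lemma injdown: "z \<in> Z \<Longrightarrow> inj_on \<Phi> (down z)"
  using inj downZ WB by (meson inj_on_subset subset_iff)

lemma PsiF: assumes z: "z \<in> Z"
  shows "card (Psi z) = Suc j \<and> \<Phi> ` down z = {A. A \<subseteq> Psi z \<and> card A = j}"
proof -
  let ?F = "\<Phi> ` down z"
  have dz: "down z \<subseteq> W" "card (down z) = Suc j" "finite (down z)" using downZ[OF z] by auto
  have fF: "finite ?F" using dz by simp
  have cF: "card ?F = Suc j" using card_image[OF injdown[OF z]] dz by simp
  have cA: "finite A \<and> card A = j" if AF: "A \<in> ?F" for A
  proof -
    obtain w where w: "w \<in> down z" "A = \<Phi> w" using AF by blast
    have "w \<in> W" using w dz by blast
    thus ?thesis using w finP[OF WB] cardP[OF WB] unfolding Lv_def by auto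
  qed
  have pr: "\<exists>S. S \<subseteq> A \<inter> B \<and> card S = j - 1 \<and> card {C'\<in>?F. S \<subseteq> C'} \<le> 2"
    if AB: "A \<in> ?F" "B \<in> ?F" "A \<noteq> B" for A B
  proof -
    obtain a where a: "a \<in> down z" "A = \<Phi> a" using AB by blast
    obtain b where b: "b \<in> down z" "B = \<Phi> b" using AB by blast
    have ne: "a \<noteq> b" using a b AB by blast
    obtain x where x: "x \<in> X" "z \<in> sphere E 2 x" "a \<in> C x z" "b \<in> C x z" "card (C x z) = 2"
      using cover[OF z a(1) b(1) ne] by blast
    have xB: "x \<in> Bl j" using XB x by blast
    have lx: "lev x = j - 1" using x unfolding Lv_def by auto
    have sub: "\<Phi> x \<subseteq> \<Phi> w" if w: "w \<in> C x z" "w \<in> down z" for w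
    proof -
      have "w \<in> W" using w dz by blast
      hence "w \<in> Bl j" "lev w = Suc (lev x)" using WB lx j1 unfolding Lv_def by auto
      thus ?thesis using downc[OF xB] w unfolding C_def by blast
    qed
    have S1: "\<Phi> x \<subseteq> A \<inter> B" using sub x a b by auto
    have S2: "card (\<Phi> x) = j - 1" using cardP[OF xB] lx by simp
    have "{C'\<in>?F. \<Phi> x \<subseteq> C'} \<subseteq> \<Phi> ` C x z"
    proof
      fix C' assume "C' \<in> {C'\<in>?F. \<Phi> x \<subseteq> C'}"
      then obtain w where w: "w \<in> down z" "C' = \<Phi> w" "\<Phi> x \<subseteq> \<Phi> w" by blast
      have "w \<in> W" using w dz by blast
      hence "w \<in> Bl j" "lev w = Suc (lev x)" using WB lx j1 unfolding Lv_def by auto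
      hence "E x w" using downc[OF xB] w by blast
      moreover have "E w z" using w Esym unfolding down_def by blast
      ultimately show "C' \<in> \<Phi> ` C x z" using w unfolding C_def by blast
    qed
    moreover have "finite (C x z)" using finC x unfolding Lv_def by auto
    ultimately have "card {C'\<in>?F. \<Phi> x \<subseteq> C'} \<le> card (\<Phi> ` C x z)" by (intro card_mono) auto
    also have "\<dots> \<le> card (C x z)" using \<open>finite (C x z)\<close> by (rule card_image_le)
    finally have S3: "card {C'\<in>?F. \<Phi> x \<subseteq> C'} \<le> 2" using x by simp
    show ?thesis using S1 S2 S3 by blast
  qed
  have "card (\<Union>?F) = Suc j \<and> ?F = {A. A \<subseteq> \<Union>?F \<and> card A = j}"
    by (rule comb[OF fF cF j1 cA pr]) auto
  thus ?thesis unfolding Psi_def .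
qed

lemma Psi_sub: "z \<in> Z \<Longrightarrow> Psi z \<subseteq> {1..D}"
  unfolding Psi_def using downZ subP WB by blast

lemma Psi_char: assumes z: "z \<in> Z" and w: "w \<in> W" shows "E w z \<longleftrightarrow> \<Phi> w \<subseteq> Psi z"
proof
  assume e: "E w z"
  have "w \<in> down z" using Esym[OF e] w z unfolding down_def Lv_def by auto
  thus "\<Phi> w \<subseteq> Psi z" unfolding Psi_def by blast
next
  assume s: "\<Phi> w \<subseteq> Psi z"
  have "card (\<Phi> w) = j" using cardP[OF WB[OF w]] w unfolding Lv_def by simp
  hence "\<Phi> w \<in> \<Phi> ` down z" using PsiF[OF z] s by blast
  then obtain w' where w': "w' \<in> down z" "\<Phi> w = \<Phi> w'" by blast
  have "w' \<in> Bl j" using w' downZ[OF z] WB by blast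
  hence "w = w'" using inj WB[OF w] w' unfolding inj_on_def by blast
  thus "E w z" using w' Esym unfolding down_def by blast
qed

lemma Psi_inj: "inj_on Psi Z"
proof (rule inj_onI)
  fix z z' assume z: "z \<in> Z" and z': "z' \<in> Z" and eq: "Psi z = Psi z'"
  define U where "U = Psi z"
  have cU: "card U = Suc j" "U \<subseteq> {1..D}" using PsiF[OF z] Psi_sub[OF z] U_def by auto
  have fU: "finite U" using cU by (simp add: finite_subset)
  obtain a where a: "a \<in> U" using cU j1 by fastforce
  have "card (U - {a}) = j" using cU a fU by simp
  hence "U - {a} \<noteq> {}" using j1 by (metis card.empty not_one_le_zero)
  then obtain b where b: "b \<in> U - {a}" by blast
  have cC: "card (U - {a, b}) = j - 1" using a b fU cU by (simp add: card_Diff_subset)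
  obtain x where x: "reach x" "lev x = j - 1" "\<Phi> x = U - {a,b}" using surjL[of "j - 1" "U - {a,b}"] cC cU by auto
  obtain wa where wa: "reach wa" "lev wa = j" "\<Phi> wa = U - {a}" using surjL[of j "U - {a}"] a fU cU by auto
  obtain wb where wb: "reach wb" "lev wb = j" "\<Phi> wb = U - {b}" using surjL[of j "U - {b}"] b fU cU by auto
  have xX: "x \<in> X" using x unfolding Lv_def by simp
  have waW: "wa \<in> W" "wb \<in> W" using wa wb unfolding Lv_def by auto
  have xB: "x \<in> Bl j" using XB xX by blast
  have E1: "E x wa" using downc[OF xB WB[OF waW(1)]] x wa j1 by auto
  have E2: "E x wb" using downc[OF xB WB[OF waW(2)]] x wb j1 by auto
  have E3: "E wa z" "E wb z" using Psi_char[OF z] waW wa wb U_def by auto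
  have E4: "E wa z'" "E wb z'" using Psi_char[OF z'] waW wa wb U_def eq by auto
  have ne: "wa \<noteq> wb" using wa wb a b by auto
  have s2: "z \<in> sphere E 2 x" if zz: "z \<in> Z" "E wa z" for z
  proof -
    have lz: "reach z" "lev z = Suc j" using zz unfolding Lv_def by auto
    have "lev x \<noteq> lev z" using lz(2) x(2) j1 by simp
    hence "x \<noteq> z" by blast
    moreover have "\<not> E x z"
    proof
      assume "E x z"
      hence "lev z = Suc (lev x) \<or> lev x = Suc (lev z)" using lev_adj[OF x(1)] by blast
      thus False using lz(2) x(2) j1 by linarith
    qed
    ultimately show ?thesis unfolding sphere2 using E1 zz by auto
  qed
  have ncpx: "NCP E x" using ncp x jk j1 by auto
  have "\<forall>y1\<in>sphere E 1 x. \<forall>y2\<in>sphere E 1 x. y1 \<noteq> y2 \<longrightarrow>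
        card {z\<in>sphere E 2 x. E y1 z \<and> E z y2} \<le> 1"
    using ncpx dm2[OF xX] unfolding NCP_def by blast
  hence c1: "card {z\<in>sphere E 2 x. E wa z \<and> E z wb} \<le> 1" using sphere1 E1 E2 ne by blast
  have fS: "finite {z\<in>sphere E 2 x. E wa z \<and> E z wb}" using finN[OF xX] by simp
  have "z \<in> {z\<in>sphere E 2 x. E wa z \<and> E z wb}" using s2[OF z E3(1)] E3 Esym by blast
  moreover have "z' \<in> {z\<in>sphere E 2 x. E wa z \<and> E z wb}" using s2[OF z' E4(1)] E4 Esym by blast
  moreover have "\<forall>a1\<in>{z\<in>sphere E 2 x. E wa z \<and> E z wb}. \<forall>a2\<in>{z\<in>sphere E 2 x. E wa z \<and> E z wb}. a1 = a2"
    using card_le_Suc0_iff_eq[OF fS] c1 by simp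
  ultimately show "z = z'" by blast
qed

lemma cardZ: "card Z = D choose Suc j"
proof -
  let ?Ed = "SIGMA w:W. up w" and ?Ed' = "SIGMA z:Z. down z"
  have fW: "finite W" using finLv by simp
  have c1: "card ?Ed = card W * (D - j)"
  proof -
    have "card ?Ed = (\<Sum>w\<in>W. card (up w))" using fW upW by (intro card_SigmaI) auto
    also have "\<dots> = (\<Sum>w\<in>W. D - j)" using upW by (intro sum.cong) auto
    finally show ?thesis by simp
  qed
  have c2': "card ?Ed' = card Z * Suc j"
  proof -
    have "card ?Ed' = (\<Sum>z\<in>Z. card (down z))" using finZ downZ by (intro card_SigmaI) auto
    also have "\<dots> = (\<Sum>z\<in>Z. Suc j)" using downZ by (intro sum.cong) auto
    finally show ?thesis by simp
  qed
  have "?Ed' = prod.swap ` ?Ed"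
  proof
    show "?Ed' \<subseteq> prod.swap ` ?Ed"
    proof
      fix p assume "p \<in> ?Ed'"
      then obtain z w where p: "p = (z,w)" "z \<in> Z" "w \<in> down z" by blast
      have "w \<in> W" using downZ p by blast
      moreover have "z \<in> up w" using p Esym unfolding down_def up_def by auto
      ultimately have "(w,z) \<in> ?Ed" by blast
      thus "p \<in> prod.swap ` ?Ed" using p by force
    qed
    show "prod.swap ` ?Ed \<subseteq> ?Ed'"
    proof
      fix p assume "p \<in> prod.swap ` ?Ed"
      then obtain w z where p: "p = (z,w)" "w \<in> W" "z \<in> up w" by auto
      have "z \<in> Z" using upW p by blast
      moreover have "w \<in> down z" using p Esym unfolding down_def up_def by auto
      ultimately show "p \<in> ?Ed'" using p by blast
    qed
  qed
  hence "card ?Ed' = card ?Ed" by (simp add: card_image)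
  hence "card Z * Suc j = (D choose j) * (D - j)" using c1 c2' cardW by simp
  also have "\<dots> = (D choose Suc j) * Suc j" by (rule binom_step)
  finally have "card Z * Suc j = (D choose Suc j) * Suc j" .
  thus ?thesis by (metis Zero_not_Suc mult_cancel2)
qed

lemma PsiZ: "Psi ` Z = L (Suc j)"
proof -
  have sub: "Psi ` Z \<subseteq> L (Suc j)"
  proof
    fix A assume "A \<in> Psi ` Z"
    then obtain z where "z \<in> Z" "A = Psi z" by blast
    thus "A \<in> L (Suc j)" using PsiF Psi_sub unfolding L_def by blast
  qed
  have "card (Psi ` Z) = card (L (Suc j))" using card_image[OF Psi_inj] cardZ card_L by simp
  thus ?thesis using card_subset_eq[OF fin_L sub] by simp
qed

lemma adjZ: assumes y: "y \<in> Bl j" and z: "z \<in> Z" shows "E y z \<longleftrightarrow> hcube_adj D (\<Phi> y) (Psi z)"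
proof -
  have h: "hcube_adj D (\<Phi> y) (Psi z) \<longleftrightarrow> card (sd (\<Phi> y) (Psi z)) = 1"
    using hcube_adj_sd subP[OF y] Psi_sub[OF z] by blast
  have cz: "card (Psi z) = Suc j" using PsiF[OF z] by blast
  have fz: "finite (Psi z)" using Psi_sub[OF z] finite_subset by blast
  have ry: "reach y" "lev y \<le> j" using y unfolding Bl_def by auto
  have cy: "card (\<Phi> y) = lev y" using cardP[OF y] .
  show ?thesis
  proof
    assume e: "E y z"
    have "lev z = Suc (lev y) \<or> lev y = Suc (lev z)" using lev_adj[OF ry(1) e] by blast
    hence ly: "lev y = j" using z ry unfolding Lv_def by auto
    hence yW: "y \<in> W" using ry unfolding Lv_def by simp
    have "\<Phi> y \<subseteq> Psi z" using Psi_char[OF z yW] e by blast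
    thus "hcube_adj D (\<Phi> y) (Psi z)" using h sd_sub_one[OF fz] cz cy ly by simp
  next
    assume "hcube_adj D (\<Phi> y) (Psi z)"
    hence "card (sd (\<Phi> y) (Psi z)) = 1" using h by blast
    hence "\<Phi> y \<subseteq> Psi z \<and> card (Psi z) = Suc (card (\<Phi> y))"
      using sd_one_sub[OF finP[OF y] fz] cz cy ry by simp
    hence s: "\<Phi> y \<subseteq> Psi z" and ly: "lev y = j" using cz cy by auto
    hence yW: "y \<in> W" using ry unfolding Lv_def by simp
    thus "E y z" using Psi_char[OF z yW] s by blast
  qed
qed

lemma adjZZ: assumes z: "z \<in> Z" and z': "z' \<in> Z" shows "E z z' \<longleftrightarrow> hcube_adj D (Psi z) (Psi z')"
proof -
  have "\<not> E z z'"
  proof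
    assume e: "E z z'"
    have "reach z" "lev z = lev z'" using z z' unfolding Lv_def by auto
    thus False using lev_par[OF _ e] by blast
  qed
  moreover have "\<not> hcube_adj D (Psi z) (Psi z')"
    using sd_same_card[of "Psi z" "Psi z'"] PsiF z z' Psi_sub finite_subset hcube_adj_sd
    by (metis finite_atLeastAtMost)
  ultimately show ?thesis by blast
qed

lemma next_HC: "\<exists>\<Phi>'. HC (Suc j) \<Phi>'"
proof -
  define \<Phi>' where "\<Phi>' y = (if lev y \<le> j then \<Phi> y else Psi y)" for y
  have BU: "Bl (Suc j) = Bl j \<union> Z" unfolding Bl_def Lv_def by auto
  have TU: "T (Suc j) = T j \<union> L (Suc j)" unfolding T_def L_def by auto
  have TD: "T j \<inter> L (Suc j) = {}" unfolding T_def L_def by auto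
  have b1: "bij_betw \<Phi>' (Bl j) (T j)"
    using hc unfolding HC_def by (subst bij_betw_cong[of _ _ \<Phi>]) (auto simp: \<Phi>'_def Bl_def)
  have b2: "bij_betw \<Phi>' Z (L (Suc j))"
  proof -
    have "bij_betw Psi Z (L (Suc j))" using Psi_inj PsiZ unfolding bij_betw_def by blast
    thus ?thesis by (subst bij_betw_cong[of _ _ Psi]) (auto simp: \<Phi>'_def Lv_def)
  qed
  have bij: "bij_betw \<Phi>' (Bl (Suc j)) (T (Suc j))"
    unfolding BU TU by (rule bij_betw_combine[OF b1 b2 TD])
  have P1: "\<Phi>' y = \<Phi> y" if "y \<in> Bl j" for y using that unfolding \<Phi>'_def Bl_def by auto
  have P2: "\<Phi>' y = Psi y" if "y \<in> Z" for y using that unfolding \<Phi>'_def Lv_def by auto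
  have crd: "\<forall>x\<in>Bl (Suc j). card (\<Phi>' x) = lev x"
  proof
    fix x assume "x \<in> Bl (Suc j)"
    hence "x \<in> Bl j \<or> x \<in> Z" using BU by blast
    thus "card (\<Phi>' x) = lev x"
    proof
      assume "x \<in> Bl j" thus ?thesis using P1 cardP by simp
    next
      assume x: "x \<in> Z" thus ?thesis using P2 PsiF unfolding Lv_def by simp
    qed
  qed
  have adj: "\<forall>x\<in>Bl (Suc j). \<forall>y\<in>Bl (Suc j). E x y \<longleftrightarrow> hcube_adj D (\<Phi>' x) (\<Phi>' y)"
  proof (intro ballI)
    fix x y assume x: "x \<in> Bl (Suc j)" and y: "y \<in> Bl (Suc j)"
    have xc: "x \<in> Bl j \<or> x \<in> Z" and yc: "y \<in> Bl j \<or> y \<in> Z" using BU x y by auto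
    show "E x y \<longleftrightarrow> hcube_adj D (\<Phi>' x) (\<Phi>' y)"
    proof (cases "x \<in> Bl j")
      case xB: True
      show ?thesis
      proof (cases "y \<in> Bl j")
        case True thus ?thesis using xB P1 adjP by simp
      next
        case False
        hence yZ: "y \<in> Z" using yc by blast
        thus ?thesis using adjZ[OF xB yZ] P1[OF xB] P2[OF yZ] by simp
      qed
    next
      case False
      hence xZ: "x \<in> Z" using xc by blast
      show ?thesis
      proof (cases "y \<in> Bl j")
        case yB: True
        have "E x y \<longleftrightarrow> E y x" using Esym by blast
        also have "\<dots> \<longleftrightarrow> hcube_adj D (\<Phi> y) (Psi x)" using adjZ[OF yB xZ] .
        also have "\<dots> \<longleftrightarrow> hcube_adj D (Psi x) (\<Phi> y)" by (rule hc_sym)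
        finally show ?thesis using P1[OF yB] P2[OF xZ] by simp
      next
        case False
        hence yZ: "y \<in> Z" using yc by blast
        thus ?thesis using adjZZ[OF xZ yZ] P2 xZ by simp
      qed
    qed
  qed
  show ?thesis using bij crd adj unfolding HC_def by blast
qed

end



context G2 begin

lemma Bl0: "Bl 0 = {x0}" unfolding Bl_def using lev0 reach_x0 by auto

lemma T0: "T 0 = {{}}"
proof
  show "T 0 \<subseteq> {{}}"
  proof
    fix A assume "A \<in> T 0"
    hence "A \<subseteq> {1..D}" "card A = 0" unfolding T_def by auto
    hence "A = {}" using finite_subset by fastforce
    thus "A \<in> {{}}" by simp
  qed
  show "{{}} \<subseteq> T 0" unfolding T_def by auto
qed

lemma hc_empty: "\<not> hcube_adj D {} {}" unfolding hcube_adj_def by simp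

lemma HC0: "HC 0 (\<lambda>_. {})"
  unfolding HC_def Bl0 T0 using hc_empty Eirr reach_x0 by (auto simp: bij_betw_def)

lemma Lv1: "Lv 1 = {y. E x0 y}"
proof
  show "Lv 1 \<subseteq> {y. E x0 y}"
  proof
    fix y assume "y \<in> Lv 1"
    hence y: "reach y" "lev y = Suc 0" unfolding Lv_def by auto
    then obtain w where w: "E w y" "reach w" "lev w = 0" using pred by blast
    hence "w = x0" using lev0 by blast
    thus "y \<in> {y. E x0 y}" using w by simp
  qed
  show "{y. E x0 y} \<subseteq> Lv 1"
  proof
    fix y assume "y \<in> {y. E x0 y}"
    hence e: "E x0 y" by simp
    have "reach y \<and> (lev y = Suc (lev x0) \<or> lev x0 = Suc (lev y))" using lev_adj[OF reach_x0(1) e] .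
    thus "y \<in> Lv 1" using reach_x0 unfolding Lv_def by auto
  qed
qed

lemma HC1: assumes k1: "1 \<le> k" shows "\<exists>\<Phi>. HC 1 \<Phi>"
proof -
  let ?N = "{y. E x0 y}"
  have fN: "finite ?N" "card ?N = D" using nbr_fin nbr_card x0V by auto
  have "\<exists>f. bij_betw f ?N {1..D}" using finite_same_card_bij[OF fN(1), of "{1..D}"] fN by simp
  then obtain f where f: "bij_betw f ?N {1..D}" by blast
  define \<Phi> where "\<Phi> y = (if y = x0 then {} else {f y})" for y
  have x0N: "x0 \<notin> ?N" using Eirr by simp
  have BU: "Bl 1 = {x0} \<union> ?N"
  proof -
    have "Bl 1 = Bl 0 \<union> Lv 1" unfolding Bl_def Lv_def by auto
    thus ?thesis using Bl0 Lv1 by simp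
  qed
  have L1: "L 1 = (\<lambda>i. {i}) ` {1..D}"
  proof
    show "L 1 \<subseteq> (\<lambda>i. {i}) ` {1..D}"
    proof
      fix A assume "A \<in> L 1"
      hence "A \<subseteq> {1..D}" "card A = 1" unfolding L_def by auto
      hence "\<exists>i. A = {i}" using card_1_singleton_iff[of A] by simp
      then obtain i where "A = {i}" by blast
      thus "A \<in> (\<lambda>i. {i}) ` {1..D}" using \<open>A \<subseteq> {1..D}\<close> by auto
    qed
    show "(\<lambda>i. {i}) ` {1..D} \<subseteq> L 1" unfolding L_def by auto
  qed
  have TU: "T 1 = {{}} \<union> L 1"
  proof
    show "T 1 \<subseteq> {{}} \<union> L 1"
    proof
      fix A assume "A \<in> T 1"
      hence A: "A \<subseteq> {1..D}" "card A \<le> 1" unfolding T_def by auto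
      have "finite A" using A finite_subset by blast
      hence "card A = 0 \<longrightarrow> A = {}" by simp
      thus "A \<in> {{}} \<union> L 1" using A unfolding L_def by auto
    qed
    show "{{}} \<union> L 1 \<subseteq> T 1" unfolding T_def L_def by auto
  qed
  have TD: "{{}} \<inter> L 1 = {}" unfolding L_def by auto
  have b1: "bij_betw \<Phi> {x0} {{}}" unfolding \<Phi>_def bij_betw_def by auto
  have b2: "bij_betw \<Phi> ?N (L 1)"
  proof -
    have "inj_on \<Phi> ?N"
    proof (rule inj_onI)
      fix y y' assume "y \<in> ?N" "y' \<in> ?N" "\<Phi> y = \<Phi> y'"
      moreover hence "f y = f y'" using x0N unfolding \<Phi>_def by (auto split: if_splits)
      ultimately show "y = y'" using f unfolding bij_betw_def inj_on_def by blast
    qed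
    moreover have "\<Phi> ` ?N = L 1"
    proof -
      have "\<Phi> ` ?N = (\<lambda>i. {i}) ` (f ` ?N)" using x0N unfolding \<Phi>_def by (auto simp: image_image)
      also have "\<dots> = L 1" using f L1 unfolding bij_betw_def by simp
      finally show ?thesis .
    qed
    ultimately show ?thesis unfolding bij_betw_def by blast
  qed
  have bij: "bij_betw \<Phi> (Bl 1) (T 1)" unfolding BU TU by (rule bij_betw_combine[OF b1 b2 TD])
  have fy: "f y \<in> {1..D}" if "y \<in> ?N" for y using f that unfolding bij_betw_def by blast
  have Ny: "y \<in> ?N \<Longrightarrow> reach y \<and> lev y = 1" for y using Lv1 unfolding Lv_def by blast
  have crd: "\<forall>x\<in>Bl 1. card (\<Phi> x) = lev x"
    using BU reach_x0 Ny x0N unfolding \<Phi>_def by auto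
  have sdi: "card (sd {} {i}) = 1" for i :: nat unfolding sd_def by simp
  have adj: "\<forall>x\<in>Bl 1. \<forall>y\<in>Bl 1. E x y \<longleftrightarrow> hcube_adj D (\<Phi> x) (\<Phi> y)"
  proof (intro ballI)
    fix x y assume x: "x \<in> Bl 1" and y: "y \<in> Bl 1"
    show "E x y \<longleftrightarrow> hcube_adj D (\<Phi> x) (\<Phi> y)"
    proof (cases "x = x0")
      case xx: True
      show ?thesis
      proof (cases "y = x0")
        case True thus ?thesis using xx Eirr hc_empty unfolding \<Phi>_def by simp
      next
        case False
        hence yN: "y \<in> ?N" using y BU by blast
        have "hcube_adj D {} {f y}" unfolding hcube_adj_sd using sdi fy[OF yN] by simp
        thus ?thesis using xx yN False unfolding \<Phi>_def by simp
      qed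
    next
      case xn: False
      hence xN: "x \<in> ?N" using x BU by blast
      show ?thesis
      proof (cases "y = x0")
        case True
        have "hcube_adj D {} {f x}" unfolding hcube_adj_sd using sdi fy[OF xN] by simp
        hence "hcube_adj D {f x} {}" using hc_sym by blast
        moreover have "E x x0" using Esym xN by blast
        ultimately show ?thesis using True xn unfolding \<Phi>_def by simp
      next
        case False
        hence yN: "y \<in> ?N" using y BU by blast
        have "\<not> E x y"
        proof
          assume e: "E x y"
          have "reach x" "lev x = lev y" using Ny xN yN by auto
          thus False using lev_par[OF _ e] by blast
        qed
        moreover have "\<not> hcube_adj D {f x} {f y}"
          using sd_same_card[of "{f x}" "{f y}"] unfolding hcube_adj_sd by simp
        ultimately show ?thesis using xn False unfolding \<Phi>_def by simp
      qed
    qed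
  qed
  show ?thesis using bij crd adj unfolding HC_def by blast
qed

lemma HCall: "j \<le> k \<Longrightarrow> \<exists>\<Phi>. HC j \<Phi>"
proof (induction j)
  case 0 thus ?case using HC0 by blast
next
  case (Suc j)
  show ?case
  proof (cases "j = 0")
    case True thus ?thesis using HC1 Suc by simp
  next
    case False
    then obtain \<Phi> where P: "HC j \<Phi>" using Suc by auto
    interpret stp V E D x0 k j \<Phi>
      by unfold_locales (use False Suc P in auto)
    show ?thesis by (rule next_HC)
  qed
qed

end

theorem theorem6:
  fixes V :: "'a set" and E :: "'a \<Rightarrow> 'a \<Rightarrow> bool" and D k :: nat and x0 :: 'a
  assumes "simple_graph V E" and "regular V E D" and "bipartite V E"
    and "x0 \<in> V"
    and "\<forall>y\<in>ball E (int k) x0. enat (dminus E x0 y) = gdist E x0 y"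
    and "\<forall>x\<in>ball E (int k - 2) x0. SSP E D x \<and> NCP E x"
  shows "\<exists>\<Phi>. bij_betw \<Phi> (ball E (int k) x0) {A. A \<subseteq> {1..D} \<and> card A \<le> k} \<and>
           (\<forall>x\<in>ball E (int k) x0. \<forall>y\<in>ball E (int k) x0. E x y \<longleftrightarrow> hcube_adj D (\<Phi> x) (\<Phi> y))"
proof -
  interpret G2 V E D x0 k by unfold_locales (use assms in auto)
  obtain \<Phi> where P: "HC k \<Phi>" using HCall by blast
  have "ball E (int k) x0 = Bl k" unfolding Bl_def by (rule ball_x0)
  moreover have "{A. A \<subseteq> {1..D} \<and> card A \<le> k} = T k" unfolding T_def by simp
  ultimately show ?thesis using P unfolding HC_def by auto
qed



end
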